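(* Let $c_0,c_1$ be non-degenerate convex loops. Then their length measures $\mu_0,\mu_1$ (which belong to $\mathcal{M}^0(S^1)$) are admissible.
   Context: Identify $S^1$ with $\mathbb{R}/2\pi\mathbb{Z}$ (arc-length measure $\mathrm{d}s$, geodesic distance $\operatorname{dist}$) and with the unit circle in $\mathbb{C}$. A convex loop is $c\in W^{1,1}(S^1,\mathbb{C})$ with $c'\neq0$ a.e. whose image is the boundary of a convex set in $\mathbb{C}$, positively oriented. Its length measure is $\mu_c:=(T_c)_\#(|c'|\,\mathrm{d}s)$, $T_c=c'/|c'|$. A convex loop is degenerate if $\mu_c=r\delta_x+r\delta_{-x}$ for some $r>0$, $x\in S^1$; otherwise non-degenerate. $\mathcal{M}^0(S^1)$ is the set of nonnegative measures $\mu$ on $S^1$ with $\int_{S^1}x\,\mathrm{d}\mu(x)=0\in\mathbb{C}$. $\ell(\zeta)=-\log(\cos^2\zeta)$ for $\zeta\in[0,\pi/2)$, $\ell(\zeta)=+\infty$ for $\zeta\ge\pi/2$. Two measures $\mu_0,\mu_1\in\mathcal{M}_+(S^1)$ are admissible if \[ \max\Big(\sup_{x\in\operatorname{supp}\mu_0}\inf_{y\in\operatorname{supp}\mu_1}\ell(\operatorname{dist}(x,y)),\ \sup_{y\in\operatorname{supp}\mu_1}\inf_{x\in\operatorname{supp}\mu_0}\ell(\operatorname{dist}(x,y))\Big)<\infty. \] *)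

theory Defs
  imports "HOL-Analysis.Analysis"
begin

text \<open>S^1 = R/2piZ: loops are 2pi-periodic maps real => complex; the weak derivative
  is given explicitly as cd (determined almost everywhere).\<close>

definition w11_loop :: "(real \<Rightarrow> complex) \<Rightarrow> (real \<Rightarrow> complex) \<Rightarrow> bool" where
  "w11_loop c cd \<longleftrightarrow>
     (\<forall>t. c (t + 2 * pi) = c t) \<and>
     set_integrable lborel {0..2 * pi} cd \<and>
     (\<forall>t\<in>{0..2 * pi}. c t = c 0 + (LINT s:{0..t}|lborel. cd s))"

text \<open>Convex loop: W^{1,1}, derivative nonzero a.e., image is the boundary of a convex
  set, positively oriented (the convex set lies to the left of the tangent a.e.).\<close>
definition convex_loop :: "(real \<Rightarrow> complex) \<Rightarrow> (real \<Rightarrow> complex) \<Rightarrow> bool" where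
  "convex_loop c cd \<longleftrightarrow>
     w11_loop c cd \<and>
     (AE s in lborel. s \<in> {0..2 * pi} \<longrightarrow> cd s \<noteq> 0) \<and>
     (\<exists>K. convex K \<and> c ` {0..2 * pi} = frontier K \<and>
        (\<forall>z\<in>K. AE s in lborel. s \<in> {0..2 * pi} \<longrightarrow> Im (cnj (cd s) * (z - c s)) \<ge> 0))"

text \<open>Length measure: push-forward of |c'| ds under T_c = c'/|c'| (sgn), a measure on the
  Borel sets of C concentrated on the unit circle S^1.\<close>
definition length_measure :: "(real \<Rightarrow> complex) \<Rightarrow> complex measure" where
  "length_measure cd =
     distr (density (restrict_space lborel {0..2 * pi}) (\<lambda>s. ennreal (cmod (cd s))))
           borel (\<lambda>s. sgn (cd s))"

definition degenerate_loop :: "(real \<Rightarrow> complex) \<Rightarrow> bool" where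
  "degenerate_loop cd \<longleftrightarrow>
     (\<exists>r::real. \<exists>x::complex. r > 0 \<and> cmod x = 1 \<and>
        (\<forall>A\<in>sets borel. emeasure (length_measure cd) A
            = ennreal r * indicator A x + ennreal r * indicator A (- x)))"

definition measure_support :: "complex measure \<Rightarrow> complex set" where
  "measure_support \<mu> = {x. \<forall>U. open U \<longrightarrow> x \<in> U \<longrightarrow> emeasure \<mu> U > 0}"

definition s1_dist :: "complex \<Rightarrow> complex \<Rightarrow> real" where
  "s1_dist x y = arccos (Re (x * cnj y))"

definition ell :: "real \<Rightarrow> ereal" where
  "ell z = (if z < pi / 2 then ereal (- ln ((cos z)\<^sup>2)) else \<infinity>)"

definition admissible :: "complex measure \<Rightarrow> complex measure \<Rightarrow> bool" where
  "admissible \<mu>0 \<mu>1 \<longleftrightarrow>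
     max (SUP x\<in>measure_support \<mu>0. INF y\<in>measure_support \<mu>1. ell (s1_dist x y))
         (SUP y\<in>measure_support \<mu>1. INF x\<in>measure_support \<mu>0. ell (s1_dist x y)) < \<infinity>"

end

theory Submission
  imports Defs
begin


lemma lm_props:
  assumes cl: "convex_loop c cd"
  defines "\<mu> \<equiv> length_measure cd"
  shows "sets \<mu> = sets borel"
    and "emeasure \<mu> UNIV < \<infinity>"
    and "AE z in \<mu>. cmod z = 1"
    and "integrable \<mu> (\<lambda>z. z)"
    and "integral\<^sup>L \<mu> (\<lambda>z. z) = 0"
    and "emeasure \<mu> UNIV \<noteq> 0"
proof -
  define M where "M = restrict_space lborel {0..2*pi}"
  have w: "w11_loop c cd" and ae: "AE s in lborel. s \<in> {0..2 * pi} \<longrightarrow> cd s \<noteq> 0"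
    using cl unfolding convex_loop_def by auto
  have si: "set_integrable lborel {0..2 * pi} cd" using w unfolding w11_loop_def by auto
  have intM: "integrable M cd"
    unfolding M_def using si by (subst integrable_restrict_space) (auto simp: set_integrable_def)
  then have cdm[measurable]: "cd \<in> borel_measurable M" by auto
  have mu: "\<mu> = distr (density M (\<lambda>s. ennreal (cmod (cd s)))) borel (\<lambda>s. sgn (cd s))"
    unfolding \<mu>_def length_measure_def M_def ..
  show "sets \<mu> = sets borel" unfolding mu by simp
  have meas: "(\<lambda>s. sgn (cd s)) \<in> measurable (density M (\<lambda>s. ennreal (cmod (cd s)))) borel"
    by simp
  have "emeasure \<mu> UNIV = emeasure (density M (\<lambda>s. ennreal (cmod (cd s)))) (space M)"
    unfolding mu by (subst emeasure_distr) auto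
  also have "\<dots> = (\<integral>\<^sup>+ s. ennreal (cmod (cd s)) \<partial>M)"
    by (subst emeasure_density) auto
  finally have tot: "emeasure \<mu> UNIV = (\<integral>\<^sup>+ s. ennreal (cmod (cd s)) \<partial>M)" .
  show "emeasure \<mu> UNIV < \<infinity>" unfolding tot using intM
    by (simp add: integrable_iff_bounded)
  show "AE z in \<mu>. cmod z = 1"
    unfolding mu
    by (subst AE_distr_iff) (auto simp: AE_density norm_sgn)
  have eq: "cmod (cd s) *\<^sub>R sgn (cd s) = cd s" for s
    by (cases "cd s = 0") (auto simp: sgn_div_norm)
  have "integrable (density M (\<lambda>s. ennreal (cmod (cd s)))) (\<lambda>s. sgn (cd s))"
    by (subst integrable_density) (auto simp: intM eq)
  then show "integrable \<mu> (\<lambda>z. z)" unfolding mu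
    by (subst integrable_distr_eq) auto
  have "integral\<^sup>L \<mu> (\<lambda>z. z) = integral\<^sup>L (density M (\<lambda>s. ennreal (cmod (cd s)))) (\<lambda>s. sgn (cd s))"
    unfolding mu by (subst integral_distr) auto
  also have "\<dots> = integral\<^sup>L M cd"
    by (subst integral_density) (auto simp: eq)
  also have "\<dots> = (LINT s:{0..2*pi}|lborel. cd s)"
    unfolding M_def by (subst integral_restrict_space) (auto simp: set_lebesgue_integral_def)
  also have "\<dots> = 0"
  proof -
    have "\<forall>t\<in>{0..2 * pi}. c t = c 0 + (LINT s:{0..t}|lborel. cd s)" using w unfolding w11_loop_def by blast
    then have "c (2*pi) = c 0 + (LINT s:{0..2*pi}|lborel. cd s)" by (meson atLeastAtMost_iff order_refl pi_ge_zero mult_nonneg_nonneg zero_le_numeral)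
    moreover have "c (0 + 2*pi) = c 0" using w unfolding w11_loop_def by blast
    ultimately show ?thesis by simp
  qed
  finally show "integral\<^sup>L \<mu> (\<lambda>z. z) = 0" .
  show "emeasure \<mu> UNIV \<noteq> 0"
  proof
    assume "emeasure \<mu> UNIV = 0"
    then have "AE s in M. ennreal (cmod (cd s)) = 0" unfolding tot
      by (subst (asm) nn_integral_0_iff_AE) auto
    then have "AE s in lborel. s \<in> {0..2*pi} \<longrightarrow> cd s = 0" unfolding M_def
      by (subst (asm) AE_restrict_space_iff) auto
    with ae have "AE s in lborel. s \<notin> {0..2*pi}" by eventually_elim auto
    then have "emeasure lborel {0..2*pi} = 0"
      by (subst AE_iff_measurable[symmetric, where P="\<lambda>s. s \<notin> {0..2*pi}"]) auto
    then show False by simp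
  qed
qed


lemma alg_pm:
  fixes x z :: complex
  assumes "cmod x = 1" "cmod z = 1" "Re (x * cnj z) = 0"
  shows "z = \<i> * x \<or> z = - (\<i> * x)"
proof -
  obtain a b where x: "x = Complex a b" by (cases x)
  obtain c d where z: "z = Complex c d" by (cases z)
  have 1: "a^2 + b^2 = 1" using assms(1) x by (simp add: cmod_def)
  have 2: "c^2 + d^2 = 1" using assms(2) z by (simp add: cmod_def)
  have 3: "a*c + b*d = 0" using assms(3) x z by simp
  have 4: "(a*d - b*c)^2 = 1"
  proof -
    have "(a*d - b*c)^2 = (a^2+b^2)*(c^2+d^2) - (a*c+b*d)^2" by algebra
    then show ?thesis using 1 2 3 by simp
  qed
  then have "a*d - b*c = 1 \<or> a*d - b*c = -1"
    by (metis power2_eq_1_iff)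
  then show ?thesis
  proof
    assume h: "a*d - b*c = 1"
    have "(c + b)^2 + (d - a)^2 = 0"
    proof -
      have "(c + b)^2 + (d - a)^2 = (a^2+b^2) + (c^2+d^2) - 2*(a*d - b*c)" by algebra
      then show ?thesis using 1 2 h by simp
    qed
    then have "c = -b" "d = a" by (smt (verit) sum_power2_eq_zero_iff)+
    then show ?thesis using x z by (simp add: complex_eq_iff)
  next
    assume h: "a*d - b*c = -1"
    have "(c - b)^2 + (d + a)^2 = 0"
    proof -
      have "(c - b)^2 + (d + a)^2 = (a^2+b^2) + (c^2+d^2) + 2*(a*d - b*c)" by algebra
      then show ?thesis using 1 2 h by simp
    qed
    then have "c = b" "d = -a" by (smt (verit) sum_power2_eq_zero_iff)+
    then show ?thesis using x z by (simp add: complex_eq_iff)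
  qed
qed

lemma nondeg_half:
  fixes \<mu> :: "complex measure"
  assumes sets: "sets \<mu> = sets borel" and fin: "emeasure \<mu> UNIV < \<infinity>"
    and ae1: "AE z in \<mu>. cmod z = 1" and int: "integrable \<mu> (\<lambda>z. z)"
    and zero: "integral\<^sup>L \<mu> (\<lambda>z. z) = 0"
    and pos: "emeasure \<mu> UNIV \<noteq> 0"
    and nd: "\<not> (\<exists>r::real. \<exists>x::complex. r > 0 \<and> cmod x = 1 \<and>
        (\<forall>A\<in>sets borel. emeasure \<mu> A
            = ennreal r * indicator A x + ennreal r * indicator A (- x)))"
    and x: "cmod x = 1"
  shows "\<exists>y\<in>measure_support \<mu>. Re (x * cnj y) > 0"
proof (rule ccontr)
  assume H: "\<not> ?thesis"
  have sp: "space \<mu> = UNIV" using sets_eq_imp_space_eq[OF sets] by simp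
  have sets': "A \<in> sets \<mu>" if "A \<in> sets borel" for A using that sets by simp
  have mc: "f \<in> borel_measurable \<mu>" if "f \<in> borel_measurable borel" for f :: "complex \<Rightarrow> real"
    unfolding measurable_cong_sets[OF sets refl] using that .
  interpret finite_measure \<mu> using fin sp by (intro finite_measureI) auto
  define P where "P = {y. Re (x * cnj y) > 0}"
  have openP: "open P" unfolding P_def
    by (intro open_Collect_less continuous_intros)
  define F where "F = {U. open U \<and> emeasure \<mu> U = 0}"
  have PF: "P \<subseteq> \<Union>F"
  proof
    fix y assume "y \<in> P"
    then have "y \<notin> measure_support \<mu>" using H P_def by auto
    then obtain U where "open U" "y \<in> U" "\<not> emeasure \<mu> U > 0"
      unfolding measure_support_def by auto
    then show "y \<in> \<Union>F" unfolding F_def by (auto simp: not_gr_zero)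
  qed
  obtain F' where F': "F' \<subseteq> F" "countable F'" "\<Union>F' = \<Union>F"
    using Lindelof[of F] unfolding F_def by auto
  have "(\<Union>U\<in>F'. U) \<in> null_sets \<mu>"
    using F' by (intro null_sets_UN') (auto simp: F_def intro!: sets' borel_open)
  then have "\<Union>F \<in> null_sets \<mu>" using F' by simp
  then have aeP: "AE z in \<mu>. Re (x * cnj z) \<le> 0"
    by (rule AE_I') (use PF in \<open>auto simp: P_def\<close>)
  have intf: "integrable \<mu> (\<lambda>z. - Re (x * cnj z))" using int by auto
  have "integral\<^sup>L \<mu> (\<lambda>z. - Re (x * cnj z)) = - integral\<^sup>L \<mu> (\<lambda>z. Re (x * cnj z))"
    by (rule integral_minus)
  also have "integral\<^sup>L \<mu> (\<lambda>z. Re (x * cnj z)) = Re (integral\<^sup>L \<mu> (\<lambda>z. x * cnj z))"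
    by (rule integral_Re) (use int in auto)
  also have "integral\<^sup>L \<mu> (\<lambda>z. x * cnj z) = x * integral\<^sup>L \<mu> (\<lambda>z. cnj z)"
    by (rule integral_mult_right_zero)
  also have "integral\<^sup>L \<mu> (\<lambda>z. cnj z) = cnj (integral\<^sup>L \<mu> (\<lambda>z. z))"
    using Bochner_Integration.integral_cnj[of \<mu> "\<lambda>z. z"] by simp
  finally have "integral\<^sup>L \<mu> (\<lambda>z. - Re (x * cnj z)) = 0" using zero by simp
  moreover have nn: "AE z in \<mu>. 0 \<le> - Re (x * cnj z)"
    using aeP by eventually_elim simp
  ultimately have "AE z in \<mu>. - Re (x * cnj z) = 0"
    using integral_nonneg_eq_0_iff_AE[OF intf nn] by blast
  then have aepm: "AE z in \<mu>. z = \<i> * x \<or> z = - (\<i> * x)"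
    using ae1 by eventually_elim (use alg_pm x in auto)
  define p where "p = \<i> * x"
  have p1: "cmod p = 1" using x by (simp add: p_def norm_mult)
  have pne: "p \<noteq> - p" using p1 by (auto simp: complex_eq_iff cmod_def)
  define a where "a = measure \<mu> {p}"
  define b where "b = measure \<mu> {-p}"
  have "integral\<^sup>L \<mu> (\<lambda>z. Re (cnj p * z)) = Re (integral\<^sup>L \<mu> (\<lambda>z. cnj p * z))"
    by (rule integral_Re) (use int in auto)
  also have "integral\<^sup>L \<mu> (\<lambda>z. cnj p * z) = cnj p * integral\<^sup>L \<mu> (\<lambda>z. z)"
    by (rule integral_mult_right_zero)
  also have "\<dots> = 0" using zero by simp
  finally have i0: "integral\<^sup>L \<mu> (\<lambda>z. Re (cnj p * z)) = 0" by simp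
  have aeI: "AE z in \<mu>. Re (cnj p * z) = indicator {p} z - indicator {-p} z"
    using aepm
  proof eventually_elim
    case (elim z)
    have pp: "Re (cnj p * p) = 1" using p1
      by (metis complex_norm_square Re_complex_of_real mult.commute one_power2)
    from elim show ?case using pne pp unfolding p_def[symmetric] by (auto simp: indicator_def)
  qed
  have mRe: "(\<lambda>z. Re (cnj p * z)) \<in> borel_measurable \<mu>" by (rule mc) measurable
  have "integral\<^sup>L \<mu> (\<lambda>z. Re (cnj p * z)) = integral\<^sup>L \<mu> (\<lambda>z. indicator {p} z - indicator {-p} z)"
    by (rule integral_cong_AE[OF mRe _ aeI]) (rule mc, measurable)
  also have "\<dots> = a - b"
  proof -
    have ip: "integrable \<mu> (indicator {p} :: complex \<Rightarrow> real)"
      by (rule integrable_real_indicator) (auto intro!: sets' simp: emeasure_eq_measure)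
    have iq: "integrable \<mu> (indicator {-p} :: complex \<Rightarrow> real)"
      by (rule integrable_real_indicator) (auto intro!: sets' simp: emeasure_eq_measure)
    show ?thesis unfolding a_def b_def
      using Bochner_Integration.integral_diff[OF ip iq] by (simp add: sp)
  qed
  finally have ab: "a = b" using i0 by simp
  have aeA: "emeasure \<mu> A = emeasure \<mu> (A \<inter> {p, -p})" if "A \<in> sets borel" for A
    using aepm that unfolding p_def[symmetric]
    by (intro emeasure_eq_AE) (auto intro!: sets' elim!: AE_mp)
  have e1: "emeasure \<mu> {p} = ennreal a" unfolding a_def by (simp add: emeasure_eq_measure)
  have e2: "emeasure \<mu> {-p} = ennreal a" unfolding ab b_def by (simp add: emeasure_eq_measure)
  have e12: "emeasure \<mu> {p, -p} = ennreal a + ennreal a"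
    using pne by (subst emeasure_insert) (auto simp: e1 e2 intro!: sets')
  have "emeasure \<mu> UNIV = ennreal a + ennreal a"
    using aeA[of UNIV] e12 by simp
  with pos have apos: "a > 0" unfolding a_def
    by (metis add.right_neutral ennreal_0 measure_nonneg order_le_less)
  have "\<forall>A\<in>sets borel. emeasure \<mu> A = ennreal a * indicator A p + ennreal a * indicator A (- p)"
  proof
    fix A :: "complex set" assume A: "A \<in> sets borel"
    show "emeasure \<mu> A = ennreal a * indicator A p + ennreal a * indicator A (- p)"
    proof (cases "p \<in> A"; cases "-p \<in> A")
      assume "p \<in> A" "-p \<in> A"
      then have "A \<inter> {p, -p} = {p, -p}" by auto
      then show ?thesis using aeA[OF A] e12 \<open>p \<in> A\<close> \<open>-p \<in> A\<close> by simp
    next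
      assume "p \<in> A" "-p \<notin> A"
      then have "A \<inter> {p, -p} = {p}" by auto
      then show ?thesis using aeA[OF A] e1 \<open>p \<in> A\<close> \<open>-p \<notin> A\<close> by simp
    next
      assume "p \<notin> A" "-p \<in> A"
      then have "A \<inter> {p, -p} = {-p}" by auto
      then show ?thesis using aeA[OF A] e2 \<open>p \<notin> A\<close> \<open>-p \<in> A\<close> by simp
    next
      assume "p \<notin> A" "-p \<notin> A"
      then have "A \<inter> {p, -p} = {}" by auto
      then show ?thesis using aeA[OF A] \<open>p \<notin> A\<close> \<open>-p \<notin> A\<close> by simp
    qed
  qed
  then show False using nd apos p1 by blast
qed


lemma supp_sphere:
  fixes \<mu> :: "complex measure"
  assumes sets: "sets \<mu> = sets borel" and ae1: "AE z in \<mu>. cmod z = 1"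
  shows "measure_support \<mu> \<subseteq> sphere 0 1"
proof
  fix y assume y: "y \<in> measure_support \<mu>"
  have sp: "space \<mu> = UNIV" using sets_eq_imp_space_eq[OF sets] by simp
  have U: "{z. cmod z \<noteq> 1} \<in> sets \<mu>" unfolding sets
    by (intro borel_open open_Collect_neq continuous_intros)
  have "emeasure \<mu> {z. cmod z \<noteq> 1} = 0"
    using ae1 AE_iff_measurable[of "{z. cmod z \<noteq> 1}" \<mu> "\<lambda>z. cmod z = 1"] U sp by auto
  moreover have "open {z::complex. cmod z \<noteq> 1}"
    by (intro open_Collect_neq continuous_intros)
  ultimately have "cmod y = 1" using y unfolding measure_support_def by force
  then show "y \<in> sphere 0 1" by simp
qed

lemma compact_unif:
  fixes S :: "complex set"
  assumes H: "\<forall>x. cmod x = 1 \<longrightarrow> (\<exists>y\<in>S. Re (x * cnj y) > 0)"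
  shows "\<exists>e>0. \<forall>x. cmod x = 1 \<longrightarrow> (\<exists>y\<in>S. Re (x * cnj y) > e)"
proof -
  define V where "V e = (\<Union>y\<in>S. {x. Re (x * cnj y) > e})" for e :: real
  have opn: "open (V e)" for e unfolding V_def
    by (intro open_UN ballI open_Collect_less continuous_intros)
  have cov: "sphere (0::complex) 1 \<subseteq> (\<Union>e\<in>{0<..}. V e)"
  proof
    fix x :: complex assume "x \<in> sphere 0 1"
    then obtain y where "y \<in> S" "Re (x * cnj y) > 0" using H by auto
    then have "x \<in> V (Re (x * cnj y) / 2)" unfolding V_def by (intro UN_I[of y]) auto
    moreover have "Re (x * cnj y) / 2 \<in> {0<..}" using \<open>Re (x * cnj y) > 0\<close> by simp
    ultimately show "x \<in> (\<Union>e\<in>{0<..}. V e)" by blast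
  qed
  obtain K where K: "K \<subseteq> {0<..}" "finite K" "sphere (0::complex) 1 \<subseteq> (\<Union>e\<in>K. V e)"
    using compactE_image[OF compact_sphere opn cov] by blast
  have "(1::complex) \<in> sphere 0 1" by simp
  then have Kne: "K \<noteq> {}" using K(3) by auto
  define e0 where "e0 = Min K"
  have e0pos: "e0 > 0" unfolding e0_def using K Kne by auto
  have "\<forall>x. cmod x = 1 \<longrightarrow> (\<exists>y\<in>S. Re (x * cnj y) > e0)"
  proof (intro allI impI)
    fix x :: complex assume "cmod x = 1"
    then have "x \<in> sphere 0 1" by simp
    then obtain k where k: "k \<in> K" "x \<in> V k" using K(3) by auto
    have "e0 \<le> k" unfolding e0_def using k K(2) by simp
    then show "\<exists>y\<in>S. Re (x * cnj y) > e0" using k unfolding V_def by force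
  qed
  then show ?thesis using e0pos by blast
qed

lemma ell_bound:
  fixes x y :: complex and e :: real
  assumes "cmod x = 1" "cmod y = 1" "Re (x * cnj y) > e" "e > 0"
  shows "ell (s1_dist x y) \<le> ereal (- ln (e\<^sup>2))"
proof -
  define t where "t = Re (x * cnj y)"
  have t1: "t \<le> 1" unfolding t_def
    using complex_Re_le_cmod[of "x * cnj y"] assms by (simp add: norm_mult)
  have te: "t > e" using assms t_def by simp
  have tlt: "arccos t < pi / 2"
    using arccos_less_arccos[of 0 t] t1 te assms(4) by simp
  have ct: "cos (arccos t) = t" using arccos[of t] t1 te assms(4) by simp
  have "ell (s1_dist x y) = ereal (- ln (t\<^sup>2))"
    unfolding ell_def s1_dist_def t_def[symmetric] using tlt ct by simp
  also have "\<dots> \<le> ereal (- ln (e\<^sup>2))"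
    using te assms(4) by (simp add: power_strict_mono)
  finally show ?thesis .
qed

lemma half_bound:
  fixes S0 S1 :: "complex set" and e :: real
  assumes "S0 \<subseteq> sphere 0 1" "S1 \<subseteq> sphere 0 1" "e > 0"
    and H: "\<forall>x. cmod x = 1 \<longrightarrow> (\<exists>y\<in>S1. Re (x * cnj y) > e)"
  shows "(SUP x\<in>S0. INF y\<in>S1. ell (s1_dist x y)) < \<infinity>"
proof -
  have "(SUP x\<in>S0. INF y\<in>S1. ell (s1_dist x y)) \<le> ereal (- ln (e\<^sup>2))"
  proof (rule SUP_least)
    fix x assume x: "x \<in> S0"
    then have x1: "cmod x = 1" using assms(1) by auto
    then obtain y where y: "y \<in> S1" "Re (x * cnj y) > e" using H by auto
    have "cmod y = 1" using y assms(2) by auto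
    then have "ell (s1_dist x y) \<le> ereal (- ln (e\<^sup>2))"
      using ell_bound x1 y assms(3) by blast
    then show "(INF y\<in>S1. ell (s1_dist x y)) \<le> ereal (- ln (e\<^sup>2))"
      using y(1) by (meson INF_lower2)
  qed
  then show ?thesis by (rule le_less_trans) simp
qed

lemma s1_dist_sym: "s1_dist x y = s1_dist y x"
proof -
  have "Re (x * cnj y) = Re (y * cnj x)"
    by (simp add: algebra_simps)
  then show ?thesis unfolding s1_dist_def by (rule arg_cong)
qed

theorem lemma3p1:
  fixes c0 c0' c1 c1' :: "real \<Rightarrow> complex"
  assumes "convex_loop c0 c0'" and "\<not> degenerate_loop c0'"
    and "convex_loop c1 c1'" and "\<not> degenerate_loop c1'"
  shows "admissible (length_measure c0') (length_measure c1')"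
proof -
  define \<mu>0 where "\<mu>0 = length_measure c0'"
  define \<mu>1 where "\<mu>1 = length_measure c1'"
  note p0 = lm_props[OF assms(1), folded \<mu>0_def]
  note p1 = lm_props[OF assms(3), folded \<mu>1_def]
  have nd0: "\<forall>x. cmod x = 1 \<longrightarrow> (\<exists>y\<in>measure_support \<mu>0. Re (x * cnj y) > 0)"
    using nondeg_half[OF p0] assms(2) unfolding degenerate_loop_def \<mu>0_def by blast
  have nd1: "\<forall>x. cmod x = 1 \<longrightarrow> (\<exists>y\<in>measure_support \<mu>1. Re (x * cnj y) > 0)"
    using nondeg_half[OF p1] assms(4) unfolding degenerate_loop_def \<mu>1_def by blast
  obtain e0 where e0: "e0 > 0" "\<forall>x. cmod x = 1 \<longrightarrow> (\<exists>y\<in>measure_support \<mu>0. Re (x * cnj y) > e0)"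
    using compact_unif[OF nd0] by blast
  obtain e1 where e1: "e1 > 0" "\<forall>x. cmod x = 1 \<longrightarrow> (\<exists>y\<in>measure_support \<mu>1. Re (x * cnj y) > e1)"
    using compact_unif[OF nd1] by blast
  have s0: "measure_support \<mu>0 \<subseteq> sphere 0 1" using supp_sphere p0 by blast
  have s1: "measure_support \<mu>1 \<subseteq> sphere 0 1" using supp_sphere p1 by blast
  have A: "(SUP x\<in>measure_support \<mu>0. INF y\<in>measure_support \<mu>1. ell (s1_dist x y)) < \<infinity>"
    using half_bound[OF s0 s1 e1] .
  have B: "(SUP y\<in>measure_support \<mu>1. INF x\<in>measure_support \<mu>0. ell (s1_dist x y)) < \<infinity>"
  proof -
    have "(SUP y\<in>measure_support \<mu>1. INF x\<in>measure_support \<mu>0. ell (s1_dist x y))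
       = (SUP y\<in>measure_support \<mu>1. INF x\<in>measure_support \<mu>0. ell (s1_dist y x))"
      by (intro SUP_cong INF_cong refl) (rule arg_cong[OF s1_dist_sym])
    then show ?thesis using half_bound[OF s1 s0 e0] by simp
  qed
  show ?thesis unfolding admissible_def \<mu>0_def[symmetric] \<mu>1_def[symmetric]
    using A B by (metis max_less_iff_conj)
qed
end
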